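(* Let $(\mathbf{x}_i,y_i)$, $i=1,\dots,n$, be training samples with $\mathbf{x}_i\in\mathbb{R}^d$, $y_i\in\{1,\dots,L\}$, let $\mathbf{x}^*_{i'}\in\mathbb{R}^d$, $i'=1,\dots,m$, be universum samples, and let $C,C^*>0$, $\Delta\ge0$. Problem (MU) is $$\min_{\mathbf{w}_1,\dots,\mathbf{w}_L,\boldsymbol\xi,\boldsymbol\zeta}\ \tfrac12\sum_{l=1}^L\|\mathbf{w}_l\|_2^2+C\sum_{i=1}^n\xi_i+C^*\sum_{i'=1}^m\sum_{k=1}^L\zeta_{i'k}$$ subject to $(\mathbf{w}_{y_i}-\mathbf{w}_l)^\top\mathbf{x}_i\ge 1-\delta_{il}-\xi_i$ for all $i\le n$, $l\le L$, and $\big|\mathbf{w}_k^\top\mathbf{x}^*_{i'}-\max_{l}\mathbf{w}_l^\top\mathbf{x}^*_{i'}\big|\le\Delta+\zeta_{i'k}$, $\zeta_{i'k}\ge0$ for all $i'\le m$, $k\le L$. Problem (CS) is the Crammer–Singer multiclass SVM on the augmented data set of $n+mL$ samples, where samples $i=1,\dots,n$ are the training samples with $C_i=C$, $e_{il}=1-\delta_{il}$, and for $i'=1,\dots,m$, $k=1,\dots,L$, the sample with index $i=n+(i'-1)L+k$ is $(\mathbf{x}_i,y_i)=(\mathbf{x}^*_{i'},k)$ with $C_i=C^*$ and $e_{il}=-\Delta(1-\delta_{il})$: $$\min_{\mathbf{w}_1,\dots,\mathbf{w}_L,\boldsymbol\xi}\ \tfrac12\sum_{l}\|\mathbf{w}_l\|_2^2+\sum_{i=1}^{n+mL}C_i\xi_i\quad\text{s.t.}\quad(\mathbf{w}_{y_i}-\mathbf{w}_l)^\top\mathbf{x}_i\ge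 e_{il}-\xi_i\ \ \forall i,l.$$ Then (MU) and (CS) are equivalent: for every fixed $(\mathbf{w}_1,\dots,\mathbf{w}_L)$, each universum sample contributes the same amount to the objective of both problems after minimizing over the slack variables, so the two problems have the same objective as a function of $(\mathbf{w}_1,\dots,\mathbf{w}_L)$ and hence the same optimal solutions in $(\mathbf{w}_1,\dots,\mathbf{w}_L)$.
   Context: $\delta_{il}=1$ if $y_i=l$ and $0$ otherwise (with $y_i$ the label of the indexed sample). *)

theory Defs
  imports "HOL-Analysis.Analysis"
begin

definition kdelta :: "nat \<Rightarrow> nat \<Rightarrow> real" where
  "kdelta a b = (if a = b then 1 else 0)"

definition reg_term :: "nat \<Rightarrow> (nat \<Rightarrow> real^'d) \<Rightarrow> real" where
  "reg_term L w = (1/2) * (\<Sum>l=1..L. (norm (w l))^2)"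

definition mu_feasible ::
  "nat \<Rightarrow> nat \<Rightarrow> nat \<Rightarrow> (nat \<Rightarrow> real^'d) \<Rightarrow> (nat \<Rightarrow> nat) \<Rightarrow> (nat \<Rightarrow> real^'d)
   \<Rightarrow> real \<Rightarrow> (nat \<Rightarrow> real^'d) \<Rightarrow> (nat \<Rightarrow> real) \<Rightarrow> (nat \<Rightarrow> nat \<Rightarrow> real) \<Rightarrow> bool" where
  "mu_feasible n m L x y xs \<Delta> w \<xi> \<zeta> \<longleftrightarrow>
     (\<forall>i\<in>{1..n}. \<forall>l\<in>{1..L}. (w (y i) - w l) \<bullet> x i \<ge> 1 - kdelta (y i) l - \<xi> i) \<and>
     (\<forall>i'\<in>{1..m}. \<forall>k\<in>{1..L}.
        \<bar>w k \<bullet> xs i' - Max ((\<lambda>l. w l \<bullet> xs i') ` {1..L})\<bar> \<le> \<Delta> + \<zeta> i' k \<and> \<zeta> i' k \<ge> 0)"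

definition mu_obj ::
  "nat \<Rightarrow> nat \<Rightarrow> nat \<Rightarrow> real \<Rightarrow> real \<Rightarrow> (nat \<Rightarrow> real^'d) \<Rightarrow> (nat \<Rightarrow> real)
   \<Rightarrow> (nat \<Rightarrow> nat \<Rightarrow> real) \<Rightarrow> real" where
  "mu_obj n m L C Cs w \<xi> \<zeta> =
     reg_term L w + C * (\<Sum>i=1..n. \<xi> i) + Cs * (\<Sum>i'=1..m. \<Sum>k=1..L. \<zeta> i' k)"

definition mu_val where
  "mu_val n m L x y xs C Cs \<Delta> w =
     Inf {mu_obj n m L C Cs w \<xi> \<zeta> | \<xi> \<zeta>. mu_feasible n m L x y xs \<Delta> w \<xi> \<zeta>}"

definition mu_opt where
  "mu_opt n m L x y xs C Cs \<Delta> w \<longleftrightarrow>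
     (\<exists>\<xi> \<zeta>. mu_feasible n m L x y xs \<Delta> w \<xi> \<zeta> \<and>
       (\<forall>w' \<xi>' \<zeta>'. mu_feasible n m L x y xs \<Delta> w' \<xi>' \<zeta>' \<longrightarrow>
          mu_obj n m L C Cs w \<xi> \<zeta> \<le> mu_obj n m L C Cs w' \<xi>' \<zeta>'))"

definition cs_feasible ::
  "nat \<Rightarrow> nat \<Rightarrow> (nat \<Rightarrow> real^'d) \<Rightarrow> (nat \<Rightarrow> nat) \<Rightarrow> (nat \<Rightarrow> nat \<Rightarrow> real)
   \<Rightarrow> (nat \<Rightarrow> real^'d) \<Rightarrow> (nat \<Rightarrow> real) \<Rightarrow> bool" where
  "cs_feasible N L X Y e w \<xi> \<longleftrightarrow>
     (\<forall>i\<in>{1..N}. \<forall>l\<in>{1..L}. (w (Y i) - w l) \<bullet> X i \<ge> e i l - \<xi> i)"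

definition cs_obj ::
  "nat \<Rightarrow> nat \<Rightarrow> (nat \<Rightarrow> real) \<Rightarrow> (nat \<Rightarrow> real^'d) \<Rightarrow> (nat \<Rightarrow> real) \<Rightarrow> real" where
  "cs_obj N L Cv w \<xi> = reg_term L w + (\<Sum>i=1..N. Cv i * \<xi> i)"

definition cs_val where
  "cs_val N L X Y Cv e w = Inf {cs_obj N L Cv w \<xi> | \<xi>. cs_feasible N L X Y e w \<xi>}"

definition cs_opt where
  "cs_opt N L X Y Cv e w \<longleftrightarrow>
     (\<exists>\<xi>. cs_feasible N L X Y e w \<xi> \<and>
       (\<forall>w' \<xi>'. cs_feasible N L X Y e w' \<xi>' \<longrightarrow> cs_obj N L Cv w \<xi> \<le> cs_obj N L Cv w' \<xi>'))"

text \<open>Augmented data set: index i = n + (i'-1)*L + k  (1 \<le> i' \<le> m, 1 \<le> k \<le> L)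
  carries (xs i', k), weight Cs and margins -\<Delta>(1-\<delta>).\<close>

definition aug_x :: "nat \<Rightarrow> nat \<Rightarrow> (nat \<Rightarrow> real^'d) \<Rightarrow> (nat \<Rightarrow> real^'d) \<Rightarrow> nat \<Rightarrow> real^'d" where
  "aug_x n L x xs i = (if i \<le> n then x i else xs ((i - n - 1) div L + 1))"

definition aug_y :: "nat \<Rightarrow> nat \<Rightarrow> (nat \<Rightarrow> nat) \<Rightarrow> nat \<Rightarrow> nat" where
  "aug_y n L y i = (if i \<le> n then y i else (i - n - 1) mod L + 1)"

definition aug_C :: "nat \<Rightarrow> real \<Rightarrow> real \<Rightarrow> nat \<Rightarrow> real" where
  "aug_C n C Cs i = (if i \<le> n then C else Cs)"

definition aug_e :: "nat \<Rightarrow> nat \<Rightarrow> (nat \<Rightarrow> nat) \<Rightarrow> real \<Rightarrow> nat \<Rightarrow> nat \<Rightarrow> real" where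
  "aug_e n L y \<Delta> i l =
     (if i \<le> n then 1 - kdelta (aug_y n L y i) l
      else - \<Delta> * (1 - kdelta (aug_y n L y i) l))"

end

theory Submission
  imports Defs
begin

lemma block_sum:
  fixes g :: "nat \<Rightarrow> real"
  shows "(\<Sum>i=n+1..n+m*L. g i) = (\<Sum>i'=1..m. \<Sum>k=1..L. g (n + (i'-1)*L + k))"
proof (induction m)
  case 0
  then show ?case by simp
next
  case (Suc m)
  have "(\<Sum>i=n+1..n+Suc m*L. g i) = (\<Sum>i=n+1..(n+m*L)+L. g i)"
    by (simp add: algebra_simps)
  also have "\<dots> = (\<Sum>i=n+1..n+m*L. g i) + (\<Sum>i=n+m*L+1..n+m*L+L. g i)"
    by (rule sum.ub_add_nat) simp
  also have "(\<Sum>i=n+m*L+1..n+m*L+L. g i) = (\<Sum>k=1..L. g (n + m*L + k))"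
    using sum.shift_bounds_cl_nat_ivl[of g 1 "n+m*L" L]
    by (simp add: add.commute add.left_commute)
  finally show ?case using Suc by simp
qed

definition hinge_tr :: "nat \<Rightarrow> (nat \<Rightarrow> real^'d) \<Rightarrow> (nat \<Rightarrow> nat) \<Rightarrow> (nat \<Rightarrow> real^'d) \<Rightarrow> nat \<Rightarrow> real" where
  "hinge_tr L x y w i = Max ((\<lambda>l. 1 - kdelta (y i) l - (w (y i) - w l) \<bullet> x i) ` {1..L})"

definition hinge_u :: "nat \<Rightarrow> (nat \<Rightarrow> real^'d) \<Rightarrow> real \<Rightarrow> (nat \<Rightarrow> real^'d) \<Rightarrow> nat \<Rightarrow> nat \<Rightarrow> real" where
  "hinge_u L xs \<Delta> w i' k = max 0 (Max ((\<lambda>l. w l \<bullet> xs i') ` {1..L}) - w k \<bullet> xs i' - \<Delta>)"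

definition Vf where
  "Vf n m L x y xs C Cs \<Delta> w = reg_term L w + C * (\<Sum>i=1..n. hinge_tr L x y w i)
     + Cs * (\<Sum>i'=1..m. \<Sum>k=1..L. hinge_u L xs \<Delta> w i' k)"

lemma Max_ge': "L \<ge> 1 \<Longrightarrow> l \<in> {1..L} \<Longrightarrow> f l \<le> Max (f ` {1..(L::nat)})"
  by (rule Max_ge) auto

lemma le_Max_iff': "L \<ge> 1 \<Longrightarrow> Max (f ` {1..(L::nat)}) \<le> (t::real) \<longleftrightarrow> (\<forall>l\<in>{1..L}. f l \<le> t)"
  by (subst Max_le_iff) auto


lemma hinge_u_ge0: "hinge_u L xs \<Delta> w i' k \<ge> 0"
  unfolding hinge_u_def by simp

lemma mu_lower:
  assumes L: "L \<ge> 1" and C: "C > 0" and Cs: "Cs > 0"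
    and f: "mu_feasible n m L x y xs \<Delta> w \<xi> \<zeta>"
  shows "Vf n m L x y xs C Cs \<Delta> w \<le> mu_obj n m L C Cs w \<xi> \<zeta>"
proof -
  have a: "hinge_tr L x y w i \<le> \<xi> i" if "i \<in> {1..n}" for i
    unfolding hinge_tr_def using f that L by (subst le_Max_iff') (auto simp: mu_feasible_def, force)
  have b: "hinge_u L xs \<Delta> w i' k \<le> \<zeta> i' k" if "i' \<in> {1..m}" "k \<in> {1..L}" for i' k
  proof -
    have "\<bar>w k \<bullet> xs i' - Max ((\<lambda>l. w l \<bullet> xs i') ` {1..L})\<bar> \<le> \<Delta> + \<zeta> i' k" "\<zeta> i' k \<ge> 0"
      using f that unfolding mu_feasible_def by auto
    then show ?thesis unfolding hinge_u_def by auto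
  qed
  have "(\<Sum>i=1..n. hinge_tr L x y w i) \<le> (\<Sum>i=1..n. \<xi> i)" using a by (rule sum_mono)
  moreover have "(\<Sum>i'=1..m. \<Sum>k=1..L. hinge_u L xs \<Delta> w i' k) \<le> (\<Sum>i'=1..m. \<Sum>k=1..L. \<zeta> i' k)"
    using b by (intro sum_mono) auto
  ultimately show ?thesis unfolding Vf_def mu_obj_def using C Cs
    by (smt (verit) mult_left_mono)
qed

lemma mu_attain:
  assumes L: "L \<ge> 1" and y: "\<forall>i\<in>{1..n}. y i \<in> {1..L}"
  shows "mu_feasible n m L x y xs \<Delta> w (hinge_tr L x y w) (hinge_u L xs \<Delta> w)
     \<and> mu_obj n m L C Cs w (hinge_tr L x y w) (hinge_u L xs \<Delta> w) = Vf n m L x y xs C Cs \<Delta> w"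
proof
  show "mu_obj n m L C Cs w (hinge_tr L x y w) (hinge_u L xs \<Delta> w) = Vf n m L x y xs C Cs \<Delta> w"
    unfolding mu_obj_def Vf_def by simp
  have a: "1 - kdelta (y i) l - (w (y i) - w l) \<bullet> x i \<le> hinge_tr L x y w i" if "l \<in> {1..L}" for i l
    unfolding hinge_tr_def using L that by (rule Max_ge')
  have b: "\<bar>w k \<bullet> xs i' - Max ((\<lambda>l. w l \<bullet> xs i') ` {1..L})\<bar> \<le> \<Delta> + hinge_u L xs \<Delta> w i' k"
    if "k \<in> {1..L}" for i' k
  proof -
    have "w k \<bullet> xs i' \<le> Max ((\<lambda>l. w l \<bullet> xs i') ` {1..L})" using L that by (rule Max_ge')
    then show ?thesis unfolding hinge_u_def by auto
  qed
  show "mu_feasible n m L x y xs \<Delta> w (hinge_tr L x y w) (hinge_u L xs \<Delta> w)"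
    unfolding mu_feasible_def using a b hinge_u_ge0 by (smt (verit))
qed


lemma idx:
  assumes "i' \<in> {1..m}" "k \<in> {1..(L::nat)}"
  shows "\<not> n + (i'-1)*L + k \<le> n" "(n + (i'-1)*L + k - n - 1) div L + 1 = i'"
    "(n + (i'-1)*L + k - n - 1) mod L + 1 = k"
proof -
  obtain a b where ab: "i' = Suc a" "k = Suc b" using assms by (cases i'; cases k) auto
  have e: "n + (i'-1)*L + k - n - 1 = b + L*a" using ab by (simp add: mult.commute)
  have "b < L" using assms ab by auto
  then show "(n + (i'-1)*L + k - n - 1) div L + 1 = i'" "(n + (i'-1)*L + k - n - 1) mod L + 1 = k"
    unfolding e using ab by auto
  show "\<not> n + (i'-1)*L + k \<le> n" using assms by auto
qed

lemma cs_split: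
  fixes g :: "nat \<Rightarrow> real"
  shows "(\<Sum>i=1..n+m*L. aug_C n C Cs i * g i) =
    C * (\<Sum>i=1..n. g i) + Cs * (\<Sum>i'=1..m. \<Sum>k=1..L. g (n + (i'-1)*L + k))"
proof -
  have "(\<Sum>i=1..n+m*L. aug_C n C Cs i * g i) = (\<Sum>i=1..n. aug_C n C Cs i * g i) + (\<Sum>i=n+1..n+m*L. aug_C n C Cs i * g i)"
    by (rule sum.ub_add_nat) simp
  also have "(\<Sum>i=1..n. aug_C n C Cs i * g i) = C * (\<Sum>i=1..n. g i)"
    by (simp add: aug_C_def sum_distrib_left)
  also have "(\<Sum>i=n+1..n+m*L. aug_C n C Cs i * g i) = (\<Sum>i=n+1..n+m*L. Cs * g i)"
    by (rule sum.cong) (auto simp: aug_C_def)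
  also have "\<dots> = Cs * (\<Sum>i'=1..m. \<Sum>k=1..L. g (n + (i'-1)*L + k))"
    using block_sum[of "\<lambda>i. Cs * g i"] by (simp add: sum_distrib_left)
  finally show ?thesis .
qed

lemma cs_lower:
  assumes L: "L \<ge> 1" and C: "C > 0" and Cs: "Cs > 0" and D: "\<Delta> \<ge> 0"
    and f: "cs_feasible (n + m * L) L (aug_x n L x xs) (aug_y n L y) (aug_e n L y \<Delta>) w \<xi>"
  shows "Vf n m L x y xs C Cs \<Delta> w \<le> cs_obj (n + m * L) L (aug_C n C Cs) w \<xi>"
proof -
  have a: "hinge_tr L x y w i \<le> \<xi> i" if "i \<in> {1..n}" for i
  proof -
    have "\<forall>l\<in>{1..L}. 1 - kdelta (y i) l - (w (y i) - w l) \<bullet> x i \<le> \<xi> i"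
    proof
      fix l assume l: "l \<in> {1..L}"
      have "i \<in> {1..n+m*L}" using that by auto
      then have "(w (aug_y n L y i) - w l) \<bullet> aug_x n L x xs i \<ge> aug_e n L y \<Delta> i l - \<xi> i"
        using f l unfolding cs_feasible_def by blast
      then show "1 - kdelta (y i) l - (w (y i) - w l) \<bullet> x i \<le> \<xi> i"
        using that by (simp add: aug_x_def aug_y_def aug_e_def)
    qed
    then show ?thesis unfolding hinge_tr_def using L by (subst le_Max_iff') auto
  qed
  have b: "hinge_u L xs \<Delta> w i' k \<le> \<xi> (n + (i'-1)*L + k)" if i': "i' \<in> {1..m}" and k: "k \<in> {1..L}" for i' k
  proof -
    let ?j = "n + (i'-1)*L + k"
    have j: "?j \<in> {1..n+m*L}"
    proof -
      have "(i'-1)*L + k \<le> (i'-1)*L + L" using k by auto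
      also have "\<dots> = i'*L" using i' by (cases i') auto
      also have "\<dots> \<le> m*L" using i' by auto
      finally show ?thesis using k by auto
    qed
    note I = idx[OF i' k, of n]
    have c: "(w k - w l) \<bullet> xs i' \<ge> - \<Delta> * (1 - kdelta k l) - \<xi> ?j" if l: "l \<in> {1..L}" for l
    proof -
      have "(w (aug_y n L y ?j) - w l) \<bullet> aug_x n L x xs ?j \<ge> aug_e n L y \<Delta> ?j l - \<xi> ?j"
        using f l j unfolding cs_feasible_def by blast
      then show ?thesis using I by (simp add: aug_x_def aug_y_def aug_e_def)
    qed
    have z: "0 \<le> \<xi> ?j" using c[OF k] by (simp add: kdelta_def inner_diff_left)
    have "\<forall>l\<in>{1..L}. w l \<bullet> xs i' - w k \<bullet> xs i' - \<Delta> \<le> \<xi> ?j"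
    proof
      fix l assume l: "l \<in> {1..L}"
      show "w l \<bullet> xs i' - w k \<bullet> xs i' - \<Delta> \<le> \<xi> ?j"
      proof (cases "l = k")
        case True then show ?thesis using z D by simp
      next
        case False then show ?thesis using c[OF l] by (simp add: kdelta_def inner_diff_left)
      qed
    qed
    then have "Max ((\<lambda>l. w l \<bullet> xs i') ` {1..L}) - w k \<bullet> xs i' - \<Delta> \<le> \<xi> ?j"
      using le_Max_iff'[OF L, of "\<lambda>l. w l \<bullet> xs i'" "\<xi> ?j + w k \<bullet> xs i' + \<Delta>"] by auto
    then show ?thesis unfolding hinge_u_def using z by simp
  qed
  have "(\<Sum>i=1..n. hinge_tr L x y w i) \<le> (\<Sum>i=1..n. \<xi> i)" using a by (rule sum_mono)
  moreover have "(\<Sum>i'=1..m. \<Sum>k=1..L. hinge_u L xs \<Delta> w i' k) \<le> (\<Sum>i'=1..m. \<Sum>k=1..L. \<xi> (n + (i'-1)*L + k))"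
    using b by (intro sum_mono) auto
  ultimately show ?thesis unfolding Vf_def cs_obj_def cs_split using C Cs
    by (smt (verit) mult_left_mono)
qed


definition xi_opt where
  "xi_opt n L x y xs \<Delta> w i = (if i \<le> n then hinge_tr L x y w i
     else hinge_u L xs \<Delta> w ((i-n-1) div L + 1) ((i-n-1) mod L + 1))"

lemma cs_attain:
  assumes L: "L \<ge> 1" and y: "\<forall>i\<in>{1..n}. y i \<in> {1..L}"
  shows "cs_feasible (n + m * L) L (aug_x n L x xs) (aug_y n L y) (aug_e n L y \<Delta>) w (xi_opt n L x y xs \<Delta> w)
     \<and> cs_obj (n + m * L) L (aug_C n C Cs) w (xi_opt n L x y xs \<Delta> w) = Vf n m L x y xs C Cs \<Delta> w"
proof
  have "(\<Sum>i'=1..m. \<Sum>k=1..L. xi_opt n L x y xs \<Delta> w (n + (i'-1)*L + k)) = (\<Sum>i'=1..m. \<Sum>k=1..L. hinge_u L xs \<Delta> w i' k)"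
    apply (intro sum.cong refl)
    subgoal for i' k using idx[of i' m k L n] by (simp add: xi_opt_def)
    done
  moreover have "(\<Sum>i=1..n. xi_opt n L x y xs \<Delta> w i) = (\<Sum>i=1..n. hinge_tr L x y w i)"
    by (intro sum.cong refl) (simp add: xi_opt_def)
  ultimately show "cs_obj (n + m * L) L (aug_C n C Cs) w (xi_opt n L x y xs \<Delta> w) = Vf n m L x y xs C Cs \<Delta> w"
    unfolding cs_obj_def cs_split Vf_def by simp
  show "cs_feasible (n + m * L) L (aug_x n L x xs) (aug_y n L y) (aug_e n L y \<Delta>) w (xi_opt n L x y xs \<Delta> w)"
    unfolding cs_feasible_def
  proof (intro ballI)
    fix i l assume i: "i \<in> {1..n + m*L}" and l: "l \<in> {1..L}"
    show "aug_e n L y \<Delta> i l - xi_opt n L x y xs \<Delta> w i \<le> (w (aug_y n L y i) - w l) \<bullet> aug_x n L x xs i"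
    proof (cases "i \<le> n")
      case True
      have "1 - kdelta (y i) l - (w (y i) - w l) \<bullet> x i \<le> hinge_tr L x y w i"
        unfolding hinge_tr_def using L l by (rule Max_ge')
      then show ?thesis using True by (simp add: aug_x_def aug_y_def aug_e_def xi_opt_def)
    next
      case False
      define i' where "i' = (i-n-1) div L + 1"
      define k where "k = (i-n-1) mod L + 1"
      have k: "k \<in> {1..L}" unfolding k_def using L
        by (simp add: Suc_leI)
      have h: "- \<Delta> * (1 - kdelta k l) - hinge_u L xs \<Delta> w i' k \<le> (w k - w l) \<bullet> xs i'"
      proof (cases "l = k")
        case True then show ?thesis using hinge_u_ge0[of L xs \<Delta> w i' k] by (simp add: kdelta_def)
      next
        case False
        have "w l \<bullet> xs i' \<le> Max ((\<lambda>l. w l \<bullet> xs i') ` {1..L})" using L l by (rule Max_ge')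
        then show ?thesis using False unfolding hinge_u_def by (simp add: kdelta_def inner_diff_left)
      qed
      then show ?thesis using False unfolding i'_def k_def
        by (simp add: aug_x_def aug_y_def aug_e_def xi_opt_def)
    qed
  qed
qed

theorem proposition2:
  fixes n m L :: nat and x xs :: "nat \<Rightarrow> real^'d" and y :: "nat \<Rightarrow> nat"
    and C Cs \<Delta> :: real
  assumes "L \<ge> 1"
    and "\<forall>i\<in>{1..n}. y i \<in> {1..L}"
    and "C > 0" and "Cs > 0" and "\<Delta> \<ge> 0"
  shows "(\<forall>w. mu_val n m L x y xs C Cs \<Delta> w =
              cs_val (n + m * L) L (aug_x n L x xs) (aug_y n L y) (aug_C n C Cs) (aug_e n L y \<Delta>) w)
       \<and> (\<forall>w. mu_opt n m L x y xs C Cs \<Delta> w \<longleftrightarrow>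
              cs_opt (n + m * L) L (aug_x n L x xs) (aug_y n L y) (aug_C n C Cs) (aug_e n L y \<Delta>) w)"
proof -
  note MLo = mu_lower[OF assms(1,3,4)]
  note MAt = mu_attain[OF assms(1,2)]
  note CLo = cs_lower[OF assms(1,3,4,5)]
  note CAt = cs_attain[OF assms(1,2)]
  let ?V = "Vf n m L x y xs C Cs \<Delta>"
  have mv: "mu_val n m L x y xs C Cs \<Delta> w = ?V w" for w
    unfolding mu_val_def
  proof (rule cInf_eq_minimum)
    show "?V w \<in> {mu_obj n m L C Cs w \<xi> \<zeta> |\<xi> \<zeta>. mu_feasible n m L x y xs \<Delta> w \<xi> \<zeta>}"
      using MAt[where w=w] by (metis (mono_tags, lifting) mem_Collect_eq)
    show "\<And>z. z \<in> {mu_obj n m L C Cs w \<xi> \<zeta> |\<xi> \<zeta>. mu_feasible n m L x y xs \<Delta> w \<xi> \<zeta>} \<Longrightarrow> ?V w \<le> z"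
      using MLo by blast
  qed
  have cv: "cs_val (n + m * L) L (aug_x n L x xs) (aug_y n L y) (aug_C n C Cs) (aug_e n L y \<Delta>) w = ?V w" for w
    unfolding cs_val_def
  proof (rule cInf_eq_minimum)
    show "?V w \<in> {cs_obj (n + m * L) L (aug_C n C Cs) w \<xi> |\<xi>. cs_feasible (n + m * L) L (aug_x n L x xs) (aug_y n L y) (aug_e n L y \<Delta>) w \<xi>}"
      using CAt[where w=w] by (metis (mono_tags, lifting) mem_Collect_eq)
    show "\<And>z. z \<in> {cs_obj (n + m * L) L (aug_C n C Cs) w \<xi> |\<xi>. cs_feasible (n + m * L) L (aug_x n L x xs) (aug_y n L y) (aug_e n L y \<Delta>) w \<xi>} \<Longrightarrow> ?V w \<le> z"
      using CLo by blast
  qed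
  have mo: "mu_opt n m L x y xs C Cs \<Delta> w \<longleftrightarrow> (\<forall>w'. ?V w \<le> ?V w')" for w
  proof
    assume "mu_opt n m L x y xs C Cs \<Delta> w"
    then obtain \<xi> \<zeta> where f: "mu_feasible n m L x y xs \<Delta> w \<xi> \<zeta>" and
      mn: "\<forall>w' \<xi>' \<zeta>'. mu_feasible n m L x y xs \<Delta> w' \<xi>' \<zeta>' \<longrightarrow>
          mu_obj n m L C Cs w \<xi> \<zeta> \<le> mu_obj n m L C Cs w' \<xi>' \<zeta>'" unfolding mu_opt_def by blast
    show "\<forall>w'. ?V w \<le> ?V w'"
    proof
      fix w'
      have "?V w \<le> mu_obj n m L C Cs w \<xi> \<zeta>" using MLo[OF f] .
      also have "\<dots> \<le> ?V w'" using mn MAt[where w=w'] by (metis (no_types))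
      finally show "?V w \<le> ?V w'" .
    qed
  next
    assume h: "\<forall>w'. ?V w \<le> ?V w'"
    show "mu_opt n m L x y xs C Cs \<Delta> w" unfolding mu_opt_def
    proof (intro exI conjI allI impI)
      show "mu_feasible n m L x y xs \<Delta> w (hinge_tr L x y w) (hinge_u L xs \<Delta> w)" using MAt[where w=w] by blast
      fix w' \<xi>' \<zeta>' assume f: "mu_feasible n m L x y xs \<Delta> w' \<xi>' \<zeta>'"
      have "mu_obj n m L C Cs w (hinge_tr L x y w) (hinge_u L xs \<Delta> w) = ?V w" using MAt[where w=w] by blast
      also have "\<dots> \<le> ?V w'" using h by blast
      also have "\<dots> \<le> mu_obj n m L C Cs w' \<xi>' \<zeta>'" using MLo[OF f] .
      finally show "mu_obj n m L C Cs w (hinge_tr L x y w) (hinge_u L xs \<Delta> w) \<le> mu_obj n m L C Cs w' \<xi>' \<zeta>'" .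
    qed
  qed
  have co: "cs_opt (n + m * L) L (aug_x n L x xs) (aug_y n L y) (aug_C n C Cs) (aug_e n L y \<Delta>) w
      \<longleftrightarrow> (\<forall>w'. ?V w \<le> ?V w')" for w
  proof
    assume "cs_opt (n + m * L) L (aug_x n L x xs) (aug_y n L y) (aug_C n C Cs) (aug_e n L y \<Delta>) w"
    then obtain \<xi> where f: "cs_feasible (n + m * L) L (aug_x n L x xs) (aug_y n L y) (aug_e n L y \<Delta>) w \<xi>" and
      mn: "\<forall>w' \<xi>'. cs_feasible (n + m * L) L (aug_x n L x xs) (aug_y n L y) (aug_e n L y \<Delta>) w' \<xi>' \<longrightarrow>
          cs_obj (n + m * L) L (aug_C n C Cs) w \<xi> \<le> cs_obj (n + m * L) L (aug_C n C Cs) w' \<xi>'"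
      unfolding cs_opt_def by blast
    show "\<forall>w'. ?V w \<le> ?V w'"
    proof
      fix w'
      have "?V w \<le> cs_obj (n + m * L) L (aug_C n C Cs) w \<xi>" using CLo[OF f] .
      also have "\<dots> \<le> ?V w'" using mn CAt[where w=w'] by metis
      finally show "?V w \<le> ?V w'" .
    qed
  next
    assume h: "\<forall>w'. ?V w \<le> ?V w'"
    show "cs_opt (n + m * L) L (aug_x n L x xs) (aug_y n L y) (aug_C n C Cs) (aug_e n L y \<Delta>) w"
      unfolding cs_opt_def
    proof (intro exI conjI allI impI)
      show "cs_feasible (n + m * L) L (aug_x n L x xs) (aug_y n L y) (aug_e n L y \<Delta>) w (xi_opt n L x y xs \<Delta> w)" using CAt[where w=w] by blast
      fix w' \<xi>' assume f: "cs_feasible (n + m * L) L (aug_x n L x xs) (aug_y n L y) (aug_e n L y \<Delta>) w' \<xi>'"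
      have "cs_obj (n + m * L) L (aug_C n C Cs) w (xi_opt n L x y xs \<Delta> w) = ?V w" using CAt[where w=w] by blast
      also have "\<dots> \<le> ?V w'" using h by blast
      also have "\<dots> \<le> cs_obj (n + m * L) L (aug_C n C Cs) w' \<xi>'" using CLo[OF f] .
      finally show "cs_obj (n + m * L) L (aug_C n C Cs) w (xi_opt n L x y xs \<Delta> w) \<le> cs_obj (n + m * L) L (aug_C n C Cs) w' \<xi>'" .
    qed
  qed
  show ?thesis using mv cv mo co by simp
qed

end
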